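(* For any finite group $G$, the difference graph $\mathcal{D}(G)$ is Eulerian.
   Context: For a finite group $G$ with identity $e$: the intersection power graph $\mathcal{G}_I(G)$ has vertex set $G$, two distinct non-identity vertices $x,y$ being adjacent iff $\langle x\rangle\cap\langle y\rangle\neq\{e\}$, and $e$ being adjacent to every other vertex. The power graph $\mathcal{P}(G)$ has vertex set $G$, two distinct vertices being adjacent iff one is a power of the other. The difference graph $\mathcal{D}(G)$ is the graph on vertex set $G$ with edge set $E(\mathcal{G}_I(G))\setminus E(\mathcal{P}(G))$, with all isolated vertices removed. *)

theory Defs
  imports "HOL-Algebra.Algebra"
begin

definition ip_adj :: "('a, 'b) monoid_scheme \<Rightarrow> 'a \<Rightarrow> 'a \<Rightarrow> bool" where
  "ip_adj G x y \<longleftrightarrow> x \<in> carrier G \<and> y \<in> carrier G \<and> x \<noteq> y \<and>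
     (x = \<one>\<^bsub>G\<^esub> \<or> y = \<one>\<^bsub>G\<^esub> \<or>
      generate G {x} \<inter> generate G {y} \<noteq> {\<one>\<^bsub>G\<^esub>})"

definition pow_adj :: "('a, 'b) monoid_scheme \<Rightarrow> 'a \<Rightarrow> 'a \<Rightarrow> bool" where
  "pow_adj G x y \<longleftrightarrow> x \<in> carrier G \<and> y \<in> carrier G \<and> x \<noteq> y \<and>
     ((\<exists>n::nat. y = x [^]\<^bsub>G\<^esub> n) \<or> (\<exists>n::nat. x = y [^]\<^bsub>G\<^esub> n))"

definition diff_adj :: "('a, 'b) monoid_scheme \<Rightarrow> 'a \<Rightarrow> 'a \<Rightarrow> bool" where
  "diff_adj G x y \<longleftrightarrow> ip_adj G x y \<and> \<not> pow_adj G x y"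

definition diff_vertices :: "('a, 'b) monoid_scheme \<Rightarrow> 'a set" where
  "diff_vertices G = {x \<in> carrier G. \<exists>y. diff_adj G x y}"

definition eulerian :: "'a set \<Rightarrow> ('a \<Rightarrow> 'a \<Rightarrow> bool) \<Rightarrow> bool" where
  "eulerian V E \<longleftrightarrow> (\<forall>v\<in>V. even (card {u \<in> V. E v u}))"

end

theory Submission
  imports Defs
begin

lemma even_card_involution:
  assumes "finite S" "\<And>x. x \<in> S \<Longrightarrow> f x \<in> S" "\<And>x. x \<in> S \<Longrightarrow> f (f x) = x"
    "\<And>x. x \<in> S \<Longrightarrow> f x \<noteq> x"
  shows "even (card S)"
  using assms
proof (induction "card S" arbitrary: S rule: less_induct)
  case less
  note fin = less.prems(1) and cl = less.prems(2) and inv = less.prems(3) and nf = less.prems(4)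
  show ?case
  proof (cases "S = {}")
    case True then show ?thesis by simp
  next
    case False
    then obtain a where a: "a \<in> S" by blast
    let ?T = "S - {a, f a}"
    have fa: "f a \<in> S" "f a \<noteq> a" using cl nf a by auto
    have "card {a, f a} \<le> card S" using fin a fa by (intro card_mono) auto
    then have cT: "card S = card ?T + 2"
      using fin a fa by (simp add: card_Diff_subset)
    have "even (card ?T)"
    proof (rule less.hyps)
      show "card ?T < card S" using cT by simp
      show "finite ?T" using fin by simp
      fix x assume x: "x \<in> ?T"
      then have xS: "x \<in> S" and xa: "x \<noteq> a" and xfa: "x \<noteq> f a" by auto
      show "f (f x) = x" using inv xS by blast
      show "f x \<noteq> x" using nf xS by blast
      have "f x \<noteq> a" using inv xS xfa by metis
      moreover have "f x \<noteq> f a" using inv a xS xa by metis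
      ultimately show "f x \<in> ?T" using cl xS by blast
    qed
    then show ?thesis using cT by simp
  qed
qed

lemma pow_iff:
  assumes "group G" "finite (carrier G)" "x \<in> carrier G"
  shows "(\<exists>n::nat. y = x [^]\<^bsub>G\<^esub> n) \<longleftrightarrow> y \<in> generate G {x}"
  using group.generate_pow_on_finite_carrier[OF assms(1) assms(2) assms(3)] by auto

lemma (in group) gen_inv:
  assumes "y \<in> carrier G"
  shows "generate G {inv y} = generate G {y}"
proof -
  have a: "generate G {inv y} \<subseteq> generate G {y}"
    by (rule generate_subgroup_incl) (auto intro: generate.inv generate_is_subgroup assms)
  have "generate G {inv (inv y)} \<subseteq> generate G {inv y}"
    by (rule generate_subgroup_incl) (auto intro: generate.inv generate_is_subgroup assms)
  then show ?thesis using a assms by simp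
qed

lemma (in group) gen_invol:
  assumes "y \<in> carrier G" "inv y = y"
  shows "generate G {y} \<subseteq> {\<one>, y}"
proof -
  have yy: "y \<otimes> y = \<one>" using assms by (metis r_inv)
  show ?thesis
  proof (rule generate_subgroup_incl)
    show "{y} \<subseteq> {\<one>, y}" by auto
    show "subgroup {\<one>, y} G"
      by (rule subgroupI) (use assms yy in auto)
  qed
qed

lemma gen_in_carrier:
  assumes "group G" "x \<in> carrier G"
  shows "generate G {x} \<subseteq> carrier G"
  using group.generate_in_carrier[OF assms(1), of "{x}"] assms by auto

theorem theorem7p7:
  fixes G :: "('a, 'b) monoid_scheme"
  assumes "group G" and "finite (carrier G)"
  shows "eulerian (diff_vertices G) (diff_adj G)"
  unfolding eulerian_def
proof
  interpret group G by fact
  fix v assume v: "v \<in> diff_vertices G"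
  let ?S = "{u \<in> diff_vertices G. diff_adj G v u}"
  have pa: "pow_adj G a b \<longleftrightarrow> a \<in> carrier G \<and> b \<in> carrier G \<and> a \<noteq> b \<and>
      (b \<in> generate G {a} \<or> a \<in> generate G {b})" for a b
    unfolding pow_adj_def using pow_iff[OF assms] by blast
  have da: "diff_adj G a b \<longleftrightarrow> a \<in> carrier G \<and> b \<in> carrier G \<and> a \<noteq> b \<and>
      a \<noteq> \<one>\<^bsub>G\<^esub> \<and> b \<noteq> \<one>\<^bsub>G\<^esub> \<and> generate G {a} \<inter> generate G {b} \<noteq> {\<one>\<^bsub>G\<^esub>} \<and>
      b \<notin> generate G {a} \<and> a \<notin> generate G {b}" for a b
    unfolding diff_adj_def ip_adj_def pa using generate.one[of G]
    by auto
  have sym: "diff_adj G a b \<Longrightarrow> diff_adj G b a" for a b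
    unfolding da by blast
  have car: "diff_adj G a b \<Longrightarrow> a \<in> carrier G \<and> b \<in> carrier G" for a b
    by (simp add: diff_adj_def ip_adj_def)
  have S: "?S = {u. diff_adj G v u}"
    unfolding diff_vertices_def using sym car by blast
  show "even (card ?S)"
    unfolding S
  proof (rule even_card_involution[where f = "\<lambda>x. inv\<^bsub>G\<^esub> x"])
    show "finite {u. diff_adj G v u}"
      by (rule finite_subset[OF _ assms(2)]) (auto simp: da)
    fix u assume u: "u \<in> {u. diff_adj G v u}"
    then have uc: "u \<in> carrier G" by (simp add: da)
    have gi: "generate G {inv\<^bsub>G\<^esub> u} = generate G {u}" by (rule gen_inv[OF uc])
    have sv: "subgroup (generate G {v}) G" by (rule generate_is_subgroup) (use u da in auto)
    have iu: "inv\<^bsub>G\<^esub> u \<in> generate G {v} \<longleftrightarrow> u \<in> generate G {v}"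
      using sv uc by (metis inv_inv subgroup.m_inv_closed)
    show "inv\<^bsub>G\<^esub> (inv\<^bsub>G\<^esub> u) = u" using uc by simp
    show "inv\<^bsub>G\<^esub> u \<in> {u. diff_adj G v u}"
      using u uc gi iu unfolding da apply (simp)
      by (metis generate.incl insertI1 inv_eq_1_iff)
    show "inv\<^bsub>G\<^esub> u \<noteq> u"
    proof
      assume e: "inv\<^bsub>G\<^esub> u = u"
      have sub: "generate G {u} \<subseteq> {\<one>\<^bsub>G\<^esub>, u}" by (rule gen_invol[OF uc e])
      from u obtain z where z: "z \<in> generate G {v}" "z \<in> generate G {u}" "z \<noteq> \<one>\<^bsub>G\<^esub>"
        unfolding da using generate.one[of G] by blast
      then have "z = u" using sub by auto
      then show False using z u by (simp add: da)
    qed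
  qed
qed

end
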